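(* Let $n\ge3$, $\varepsilon\ge0$, let $\mathcal{M}\subseteq\{1,\dots,n\}$ be a sample set that is a union of twin samples (pairs $\{i,i+1\}$) and contains $1$ and $n$, let $A=\mathbf{I}_{\mathcal{M}}$ and $y\in\mathbb{R}^{|\mathcal{M}|}$. If $z^\star\in\mathbb{R}^n$ is an optimal solution of $\min_{z}\|Dz\|_1$ subject to $\|Az-y\|_\infty\le\varepsilon$, then $z^\star$ is sign consistent with respect to $\mathcal{M}$.
   Context: $D\in\mathbb{R}^{(n-2)\times n}$ is the second-order difference operator, $(Dz)_k=z_k-2z_{k+1}+z_{k+2}$; $\mathbf{I}_{\mathcal{M}}$ consists of the rows of the identity indexed by $\mathcal{M}$, so $Az=z_{\mathcal{M}}$. For $k\in\{2,\dots,n-1\}$ let $s_k=\mathrm{sign}(z_{k-1}-2z_k+z_{k+1})$ (with $\mathrm{sign}(0)=0$). A profile $z$ is sign consistent (with respect to $\mathcal{M}$) if for any two consecutive samples $i<j$ in $\mathcal{M}$ (no element of $\mathcal{M}$ strictly between them) one of the following holds: (i) for all $k,h$ with $i\le k,h\le j$ (for which $s_k,s_h$ are defined), $s_k\ne0$ and $s_h\ne0$ imply $s_k=s_h$; (ii) $s_k=0$ for every $k$ with $i<k<j$. *)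

theory Defs
  imports Complex_Main
begin

text \<open>Vectors in R^n are functions nat => real, only indices 1..n are relevant.\<close>

definition second_diff :: "(nat \<Rightarrow> real) \<Rightarrow> nat \<Rightarrow> real" where
  "second_diff z k = z k - 2 * z (k + 1) + z (k + 2)"

definition D_l1 :: "nat \<Rightarrow> (nat \<Rightarrow> real) \<Rightarrow> real" where
  "D_l1 n z = (\<Sum>k=1..n-2. \<bar>second_diff z k\<bar>)"

text \<open>Feasibility: sup-norm of A z - y at most eps, A selecting the rows in M;
  y is indexed by the elements of M.\<close>
definition feasible :: "nat set \<Rightarrow> (nat \<Rightarrow> real) \<Rightarrow> real \<Rightarrow> (nat \<Rightarrow> real) \<Rightarrow> bool" where
  "feasible M y eps z \<longleftrightarrow> (\<forall>i\<in>M. \<bar>z i - y i\<bar> \<le> eps)"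

definition optimal :: "nat \<Rightarrow> nat set \<Rightarrow> (nat \<Rightarrow> real) \<Rightarrow> real \<Rightarrow> (nat \<Rightarrow> real) \<Rightarrow> bool" where
  "optimal n M y eps z \<longleftrightarrow> feasible M y eps z \<and>
     (\<forall>w. feasible M y eps w \<longrightarrow> D_l1 n z \<le> D_l1 n w)"

text \<open>s_k = sign(z_{k-1} - 2 z_k + z_{k+1}), meaningful for 2 <= k <= n-1.\<close>
definition sgn_curv :: "(nat \<Rightarrow> real) \<Rightarrow> nat \<Rightarrow> real" where
  "sgn_curv z k = sgn (z (k - 1) - 2 * z k + z (k + 1))"

definition union_of_twins :: "nat \<Rightarrow> nat set \<Rightarrow> bool" where
  "union_of_twins n M \<longleftrightarrow> (\<exists>T \<subseteq> {1..n-1}. M = (\<Union>i\<in>T. {i, i + 1}))"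

definition consecutive_in :: "nat set \<Rightarrow> nat \<Rightarrow> nat \<Rightarrow> bool" where
  "consecutive_in M i j \<longleftrightarrow> i \<in> M \<and> j \<in> M \<and> i < j \<and> (\<forall>m\<in>M. \<not> (i < m \<and> m < j))"

definition sign_consistent :: "nat \<Rightarrow> nat set \<Rightarrow> (nat \<Rightarrow> real) \<Rightarrow> bool" where
  "sign_consistent n M z \<longleftrightarrow>
    (\<forall>i j. consecutive_in M i j \<longrightarrow>
      ((\<forall>k h. i \<le> k \<and> k \<le> j \<and> i \<le> h \<and> h \<le> j \<and>
               2 \<le> k \<and> k \<le> n - 1 \<and> 2 \<le> h \<and> h \<le> n - 1 \<and>
               sgn_curv z k \<noteq> 0 \<and> sgn_curv z h \<noteq> 0 \<longrightarrow> sgn_curv z k = sgn_curv z h)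
       \<or> (\<forall>k. i < k \<and> k < j \<longrightarrow> sgn_curv z k = 0)))"

end

theory Submission
  imports Defs
begin

lemma tv_ge:
  fixes x :: "nat \<Rightarrow> real"
  assumes "p \<le> r"
  shows "\<bar>x r - x p\<bar> \<le> (\<Sum>k\<in>{p..<r}. \<bar>x (Suc k) - x k\<bar>)"
proof -
  have "x r - x p = (\<Sum>k\<in>{p..<r}. x (Suc k) - x k)"
    using sum_Suc_diff'[OF assms, of x] by simp
  then show ?thesis by (metis sum_abs)
qed

lemma sum_abs_strict:
  fixes d :: "nat \<Rightarrow> real"
  assumes "finite S" "k \<in> S" "h \<in> S" "d k > 0" "d h < 0"
  shows "\<bar>\<Sum>t\<in>S. d t\<bar> < (\<Sum>t\<in>S. \<bar>d t\<bar>)"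
proof -
  have a: "\<bar>d h\<bar> - d h \<le> (\<Sum>t\<in>S. \<bar>d t\<bar> - d t)"
    by (rule member_le_sum) (use assms in auto)
  have b: "\<bar>d k\<bar> + d k \<le> (\<Sum>t\<in>S. \<bar>d t\<bar> + d t)"
    by (rule member_le_sum) (use assms in auto)
  have "(\<Sum>t\<in>S. \<bar>d t\<bar> - d t) = (\<Sum>t\<in>S. \<bar>d t\<bar>) - (\<Sum>t\<in>S. d t)"
    by (simp add: sum_subtractf)
  moreover have "(\<Sum>t\<in>S. \<bar>d t\<bar> + d t) = (\<Sum>t\<in>S. \<bar>d t\<bar>) + (\<Sum>t\<in>S. d t)"
    by (simp add: sum.distrib)
  ultimately show ?thesis using a b assms by (auto simp: abs_if split: if_splits)
qed

lemma key:
  fixes x :: "nat \<Rightarrow> real"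
  assumes pq: "Suc p < q"
    and sm: "(\<Sum>m\<in>{Suc p..<q}. x m) = real (q - Suc p) * c"
    and tv: "(\<Sum>k\<in>{p..<q}. \<bar>x (Suc k) - x k\<bar>) \<le> \<bar>c - x p\<bar> + \<bar>x q - c\<bar>"
  shows "(\<forall>k\<in>{p..<q}. \<forall>h\<in>{p..<q}. \<not>(x (Suc k) - x k > 0 \<and> x (Suc h) - x h < 0))
         \<or> (\<forall>m\<in>{Suc p..<q}. x m = c)"
proof (rule ccontr)
  assume "\<not> ?thesis"
  then obtain k h m where kh: "k\<in>{p..<q}" "h\<in>{p..<q}" "x (Suc k) - x k > 0" "x (Suc h) - x h < 0"
    and m: "m\<in>{Suc p..<q}" "x m \<noteq> c" by blast
  define TV where "TV = (\<Sum>k\<in>{p..<q}. \<bar>x (Suc k) - x k\<bar>)"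
  have "(\<Sum>k\<in>{p..<q}. x (Suc k) - x k) = x q - x p"
    using sum_Suc_diff'[of p q x] pq by simp
  then have t1: "\<bar>x q - x p\<bar> < TV"
    using sum_abs_strict[of "{p..<q}" k h "\<lambda>k. x (Suc k) - x k"] kh unfolding TV_def by simp
  have split: "TV \<ge> \<bar>x r - x p\<bar> + \<bar>x q - x r\<bar>" if "p \<le> r" "r \<le> q" for r
  proof -
    have "TV = (\<Sum>k\<in>{p..<r}. \<bar>x (Suc k) - x k\<bar>) + (\<Sum>k\<in>{r..<q}. \<bar>x (Suc k) - x k\<bar>)"
      unfolding TV_def using sum.atLeastLessThan_concat[OF that, of "\<lambda>k. \<bar>x (Suc k) - x k\<bar>"] by simp
    then show ?thesis using tv_ge[OF that(1), of x] tv_ge[OF that(2), of x] by linarith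
  qed
  have L: "real (q - Suc p) = (\<Sum>m\<in>{Suc p..<q}. 1)" by simp
  obtain r where r: "r\<in>{Suc p..<q}" "x r > c"
  proof (rule ccontr)
    assume "\<not> thesis"
    then have le: "\<forall>r\<in>{Suc p..<q}. x r \<le> c" using that by force
    have "(\<Sum>r\<in>{Suc p..<q}. c - x r) = 0"
      using sm by (simp add: sum_subtractf)
    then have "\<forall>r\<in>{Suc p..<q}. c - x r = 0"
      using sum_nonneg_eq_0_iff[of "{Suc p..<q}" "\<lambda>r. c - x r"] le by auto
    then show False using m by auto
  qed
  obtain r' where r': "r'\<in>{Suc p..<q}" "x r' < c"
  proof (rule ccontr)
    assume "\<not> thesis"
    then have le: "\<forall>r\<in>{Suc p..<q}. x r \<ge> c" using that by force
    have "(\<Sum>r\<in>{Suc p..<q}. x r - c) = 0"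
      using sm by (simp add: sum_subtractf)
    then have "\<forall>r\<in>{Suc p..<q}. x r - c = 0"
      using sum_nonneg_eq_0_iff[of "{Suc p..<q}" "\<lambda>r. x r - c"] le by auto
    then show False using m by auto
  qed
  have t2: "TV \<ge> \<bar>x r - x p\<bar> + \<bar>x q - x r\<bar>" using split r by auto
  have t3: "TV \<ge> \<bar>x r' - x p\<bar> + \<bar>x q - x r'\<bar>" using split r' by auto
  have "TV > \<bar>c - x p\<bar> + \<bar>x q - c\<bar>"
    using t1 t2 t3 r(2) r'(2) by (auto simp: abs_if split: if_splits)
  then show False using tv unfolding TV_def by simp
qed

theorem theorem3:
  fixes n :: nat and eps :: real and M :: "nat set" and y z :: "nat \<Rightarrow> real"
  assumes "n \<ge> 3" and "eps \<ge> 0"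
    and "M \<subseteq> {1..n}" and "union_of_twins n M" and "1 \<in> M" and "n \<in> M"
    and "optimal n M y eps z"
  shows "sign_consistent n M z"
  unfolding sign_consistent_def
proof (intro allI impI)
  fix i j assume cij: "consecutive_in M i j"
  hence iM: "i\<in>M" "j\<in>M" "i<j" and nb: "\<forall>m\<in>M. \<not>(i<m \<and> m<j)"
    by (auto simp: consecutive_in_def)
  show "(\<forall>k h. i \<le> k \<and> k \<le> j \<and> i \<le> h \<and> h \<le> j \<and>
               2 \<le> k \<and> k \<le> n - 1 \<and> 2 \<le> h \<and> h \<le> n - 1 \<and>
               sgn_curv z k \<noteq> 0 \<and> sgn_curv z h \<noteq> 0 \<longrightarrow> sgn_curv z k = sgn_curv z h)
       \<or> (\<forall>k. i < k \<and> k < j \<longrightarrow> sgn_curv z k = 0)"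
  proof (cases "j = Suc i")
    case True then show ?thesis by auto
  next
    case False
    hence ji: "i + 2 \<le> j" using iM by auto
    have si: "Suc i \<notin> M" using nb ji by auto
    have sj: "j - 1 \<notin> M" using nb ji by auto
    obtain T where T: "T \<subseteq> {1..n-1}" "M = (\<Union>t\<in>T. {t, t+1})"
      using assms(4) unfolding union_of_twins_def by auto
    have i2: "2 \<le> i"
    proof -
      obtain t where "t \<in> T" "i \<in> {t, t+1}" using iM(1) T(2) by auto
      moreover have "t + 1 \<in> M" using \<open>t \<in> T\<close> T(2) by auto
      ultimately show ?thesis using T(1) si by auto
    qed
    have jn: "j \<le> n - 1"
    proof -
      obtain t where "t \<in> T" "j \<in> {t, t+1}" using iM(2) T(2) by auto
      moreover have "t \<in> M" using \<open>t \<in> T\<close> T(2) by auto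
      ultimately show ?thesis using T(1) sj by auto
    qed
    define c where "c = (z j - z i) / (real j - real i)"
    define w where "w = (\<lambda>m. if i \<le> m \<and> m \<le> j then z i + (real m - real i) * c else z m)"
    define x where "x = (\<lambda>m. z (Suc m) - z m)"
    have sd: "second_diff f k = f k - 2 * f (Suc k) + f (Suc (Suc k))" for f k
      by (simp add: second_diff_def numeral_2_eq_2)
    have sdz: "second_diff z k = x (Suc k) - x k" for k
      by (simp add: sd x_def)
    have wj: "w j = z j" using iM(3) by (simp add: w_def c_def)
    have wi: "w i = z i" using iM(3) by (simp add: w_def)
    have wout: "w m = z m" if "m \<le> i \<or> j \<le> m" for m
      using that wi wj by (auto simp: w_def)
    have wfeas: "feasible M y eps w"
    proof -
      have "w m = z m" if "m \<in> M" for m using that nb wout by force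
      then show ?thesis using assms(7) by (auto simp: optimal_def feasible_def)
    qed
    let ?S = "{i-1..<j}"
    let ?A = "{1..n-2}"
    have SA: "?S \<subseteq> ?A" using i2 jn by auto
    have outeq: "second_diff w k = second_diff z k" if "k \<notin> ?S" for k
    proof -
      have "k + 2 \<le> i \<or> j \<le> k" using that i2 by auto
      then show ?thesis using wout by (auto simp: sd)
    qed
    have "D_l1 n z \<le> D_l1 n w" using assms(7) wfeas by (auto simp: optimal_def)
    moreover have dsp: "D_l1 n f = (\<Sum>k\<in>?A - ?S. \<bar>second_diff f k\<bar>) + (\<Sum>k\<in>?S. \<bar>second_diff f k\<bar>)" for f
      unfolding D_l1_def using sum.subset_diff[OF SA, of "\<lambda>k. \<bar>second_diff f k\<bar>"] by simp
    moreover have "(\<Sum>k\<in>?A - ?S. \<bar>second_diff w k\<bar>) = (\<Sum>k\<in>?A - ?S. \<bar>second_diff z k\<bar>)"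
      using outeq by (intro sum.cong) auto
    ultimately have tvzw: "(\<Sum>k\<in>?S. \<bar>second_diff z k\<bar>) \<le> (\<Sum>k\<in>?S. \<bar>second_diff w k\<bar>)"
      using dsp[of z] dsp[of w] by linarith
    have wmid: "second_diff w k = 0" if "k \<in> {i..<j-1}" for k
      using that by (auto simp: sd w_def algebra_simps)
    have "(\<Sum>k\<in>?S. \<bar>second_diff w k\<bar>) = (\<Sum>k\<in>{i-1, j-1}. \<bar>second_diff w k\<bar>)"
    proof (rule sum.mono_neutral_right)
      show "\<forall>k\<in>?S - {i-1, j-1}. \<bar>second_diff w k\<bar> = 0"
      proof
        fix k assume "k \<in> ?S - {i-1, j-1}"
        then have "k \<in> {i..<j-1}" by auto
        then show "\<bar>second_diff w k\<bar> = 0" using wmid by simp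
      qed
    qed (use i2 ji in auto)
    also have "\<dots> = \<bar>second_diff w (i-1)\<bar> + \<bar>second_diff w (j-1)\<bar>"
      using ji by simp
    also have "second_diff w (i-1) = c - x (i-1)"
    proof -
      have "Suc (i-1) = i" "Suc (Suc (i-1)) = Suc i" using i2 by auto
      then show ?thesis using i2 ji wout[of "i-1"] wi
        by (simp add: sd w_def x_def algebra_simps)
    qed
    also have "second_diff w (j-1) = x j - c"
    proof -
      have "Suc (j-1) = j" "Suc (Suc (j-1)) = Suc j" using ji by auto
      moreover have "w (j-1) = z j - c"
      proof -
        have "i \<le> j-1 \<and> j-1 \<le> j" using ji by auto
        then have "w (j-1) = z i + (real (j-1) - real i) * c" by (simp add: w_def)
        moreover have "real (j-1) = real j - 1" using ji by (simp add: of_nat_diff)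
        moreover have "(real j - real i) * c = z j - z i" using iM(3) by (simp add: c_def)
        ultimately show ?thesis by (simp add: algebra_simps)
      qed
      ultimately show ?thesis using wout[of "Suc j"] wj
        by (simp add: sd x_def algebra_simps)
    qed
    finally have tvw: "(\<Sum>k\<in>?S. \<bar>second_diff w k\<bar>) = \<bar>c - x (i-1)\<bar> + \<bar>x j - c\<bar>" .
    have Si: "Suc (i-1) = i" using i2 by auto
    have smx: "(\<Sum>m\<in>{Suc (i-1)..<j}. x m) = real (j - Suc (i-1)) * c"
    proof -
      have "(\<Sum>m\<in>{i..<j}. x m) = z j - z i"
        unfolding x_def using sum_Suc_diff'[of i j z] iM(3) by simp
      moreover have "real (j - i) * c = z j - z i"
        using iM(3) by (simp add: c_def of_nat_diff)
      ultimately show ?thesis using Si by simp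
    qed
    have K: "(\<forall>k\<in>?S. \<forall>h\<in>?S. \<not>(x (Suc k) - x k > 0 \<and> x (Suc h) - x h < 0))
         \<or> (\<forall>m\<in>{Suc (i-1)..<j}. x m = c)"
      by (rule key) (use iM(3) Si smx tvzw tvw sdz in auto)
    have sc: "sgn_curv z k = sgn (x k - x (k-1))" if k1: "1 \<le> k" for k
    proof -
      obtain k' where "k = Suc k'" using k1 by (cases k) auto
      then show ?thesis by (simp add: sgn_curv_def x_def algebra_simps)
    qed
    from K show ?thesis
    proof
      assume L: "\<forall>k\<in>?S. \<forall>h\<in>?S. \<not>(x (Suc k) - x k > 0 \<and> x (Suc h) - x h < 0)"
      have "sgn_curv z k = sgn_curv z h"
        if "i \<le> k" "k \<le> j" "i \<le> h" "h \<le> j" "sgn_curv z k \<noteq> 0" "sgn_curv z h \<noteq> 0" for k h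
      proof -
        have k1: "k - 1 \<in> ?S" "Suc (k-1) = k" and h1: "h - 1 \<in> ?S" "Suc (h-1) = h"
          using that i2 by auto
        have "\<not>(x k - x (k-1) > 0 \<and> x h - x (h-1) < 0)"
             "\<not>(x h - x (h-1) > 0 \<and> x k - x (k-1) < 0)"
          using L k1 h1 by metis+
        then show ?thesis using that sc[of k] sc[of h] i2
          by (auto simp: sgn_if split: if_splits)
      qed
      then show ?thesis by blast
    next
      assume R: "\<forall>m\<in>{Suc (i-1)..<j}. x m = c"
      have "sgn_curv z k = 0" if "i < k" "k < j" for k
      proof -
        have "k - 1 \<in> {i..<j}" "k \<in> {i..<j}" using that by auto
        then have "x k = c" "x (k-1) = c" using R Si by auto
        then show ?thesis using sc[of k] that by simp
      qed
      then show ?thesis by blast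
    qed
  qed
qed

end
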